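(* Let $z,w>0$ be such that $\mathrm{DAG}(z,w)<\infty$, and let $G$ be a random labelled DAG drawn from the Boltzmann model with parameters $(z,w)$. Let $N_1,N_2,\dots$ be the sizes of the successive layers $V_1,V_2,\dots$ of the root-layering of $G$ (with $N_i=0$ if the root-layering has fewer than $i$ layers). Then for every $k\ge 1$, all positive integers $n_1,\dots,n_k$ for which the conditioning event has positive probability, and every integer $n_{k+1}\ge 0$, \[\mathbb P_{z,w}[N_{k+1}=n_{k+1}\mid N_1=n_1,\dots,N_k=n_k]=\mathbb P_{z,w}[N_2=n_{k+1}\mid N_1=n_k].\] That is, the sequence of layer sizes is a time-homogeneous Markov chain.
   Context: A labelled DAG with $n$ vertices is a directed acyclic graph on vertex set $\{1,\dots,n\}$ ($n\ge0$). For a DAG $G$ write $v(G)$, $e(G)$, $s(G)$ for its numbers of vertices, edges and sources (vertices of in-degree $0$). The graphic generating function of DAGs is $\mathrm{DAG}(z,w,u)=\sum_G \frac{z^{v(G)}w^{e(G)}u^{s(G)}}{(1+w)^{\binom{v(G)}{2}}v(G)!}$, the sum over all labelled DAGs, and $\mathrm{DAG}(z,w)=\mathrm{DAG}(z,w,1)$. The Boltzmann model with parameters $(z,w)$ is the probability distribution $\mathbb P_{z,w}[G]=\frac{z^{v(G)}w^{e(G)}}{(1+w)^{\binom{v(G)}{2}}v(G)!\,\mathrm{DAG}(z,w)}$ on labelled DAGs. The root-layering of a DAG $G=(V,E)$ is the ordered partition $(V_1,\dots,V_k)$ of $V$ where $V_i$ is the set of sources of the graph obtained from $G$ by deleting $V_1\cup\dots\cup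 V_{i-1}$. *)

theory Defs
  imports Complex_Main
begin

definition dags :: "nat \<Rightarrow> (nat \<times> nat) set set" where
  "dags n = {E. E \<subseteq> {1..n} \<times> {1..n} \<and> acyclic E}"

definition dag_weight :: "real \<Rightarrow> real \<Rightarrow> nat \<Rightarrow> (nat \<times> nat) set \<Rightarrow> real" where
  "dag_weight z w n E = z ^ n * w ^ card E / ((1 + w) ^ (n choose 2) * fact n)"

definition event_mass :: "real \<Rightarrow> real \<Rightarrow> (nat \<Rightarrow> (nat \<times> nat) set \<Rightarrow> bool) \<Rightarrow> real" where
  "event_mass z w P = (\<Sum>n. \<Sum>E\<in>{E \<in> dags n. P n E}. dag_weight z w n E)"

definition DAG_finite :: "real \<Rightarrow> real \<Rightarrow> bool" where
  "DAG_finite z w \<longleftrightarrow> summable (\<lambda>n. \<Sum>E\<in>dags n. dag_weight z w n E)"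

definition DAG_gf :: "real \<Rightarrow> real \<Rightarrow> real" where
  "DAG_gf z w = event_mass z w (\<lambda>_ _. True)"

definition dag_prob :: "real \<Rightarrow> real \<Rightarrow> (nat \<Rightarrow> (nat \<times> nat) set \<Rightarrow> bool) \<Rightarrow> real" where
  "dag_prob z w P = event_mass z w P / DAG_gf z w"

definition dag_cond_prob :: "real \<Rightarrow> real \<Rightarrow> (nat \<Rightarrow> (nat \<times> nat) set \<Rightarrow> bool)
    \<Rightarrow> (nat \<Rightarrow> (nat \<times> nat) set \<Rightarrow> bool) \<Rightarrow> real" where
  "dag_cond_prob z w A B = dag_prob z w (\<lambda>n E. A n E \<and> B n E) / dag_prob z w B"

definition srcs :: "(nat \<times> nat) set \<Rightarrow> nat set \<Rightarrow> nat set" where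
  "srcs E R = {v \<in> R. \<not> (\<exists>u\<in>R. (u, v) \<in> E)}"

fun remaining :: "nat \<Rightarrow> (nat \<times> nat) set \<Rightarrow> nat \<Rightarrow> nat set" where
  "remaining n E 0 = {1..n}"
| "remaining n E (Suc i) = remaining n E i - srcs E (remaining n E i)"

text \<open>Layer V_i (1-indexed, i \<ge> 1); empty once all vertices are removed.\<close>
definition root_layer :: "nat \<Rightarrow> (nat \<times> nat) set \<Rightarrow> nat \<Rightarrow> nat set" where
  "root_layer n E i = srcs E (remaining n E (i - 1))"

definition layer_size :: "nat \<Rightarrow> (nat \<times> nat) set \<Rightarrow> nat \<Rightarrow> nat" where
  "layer_size n E i = card (root_layer n E i)"

end

theory Submission
  imports Defs "HOL-Library.FuncSet"
begin


lemma srcs_subset: "srcs E R \<subseteq> R" by (auto simp: srcs_def)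

lemma remaining_subset: "remaining n E i \<subseteq> {1..n}"
  by (induction i) auto

lemma finite_dags: "finite (dags n)"
proof -
  have "dags n \<subseteq> Pow ({1..n} \<times> {1..n})" by (auto simp: dags_def)
  thus ?thesis by (rule finite_subset) auto
qed

lemma srcs_image:
  assumes "inj_on p V" "E \<subseteq> V \<times> V" "R \<subseteq> V"
  shows "srcs (map_prod p p ` E) (p ` R) = p ` srcs E R"
proof
  show "srcs (map_prod p p ` E) (p ` R) \<subseteq> p ` srcs E R"
  proof
    fix x assume x: "x \<in> srcs (map_prod p p ` E) (p ` R)"
    then obtain v where v: "v \<in> R" "x = p v" by (auto simp: srcs_def)
    have "\<forall>u\<in>R. (u,v) \<notin> E"
    proof (intro ballI notI)
      fix u assume "u \<in> R" "(u,v) \<in> E"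
      have "(p u, p v) \<in> map_prod p p ` E" using \<open>(u,v) \<in> E\<close> by force
      moreover have "p u \<in> p ` R" using \<open>u \<in> R\<close> by auto
      moreover have "\<not> (\<exists>u\<in>p ` R. (u, p v) \<in> map_prod p p ` E)"
        using x v(2) unfolding srcs_def by simp
      ultimately show False by (metis bexI)
    qed
    thus "x \<in> p ` srcs E R" using v by (auto simp: srcs_def)
  qed
next
  show "p ` srcs E R \<subseteq> srcs (map_prod p p ` E) (p ` R)"
  proof
    fix x assume "x \<in> p ` srcs E R"
    then obtain v where v: "v \<in> R" "\<forall>u\<in>R. (u,v) \<notin> E" "x = p v" by (auto simp: srcs_def)
    have "\<not> (\<exists>u\<in>p ` R. (u, x) \<in> map_prod p p ` E)"
    proof
      assume "\<exists>u\<in>p ` R. (u, x) \<in> map_prod p p ` E"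
      then obtain u a b where "u \<in> R" "(a,b) \<in> E" "p u = p a" "p v = p b" using v by auto
      moreover have "a \<in> V" "b \<in> V" using \<open>(a,b)\<in>E\<close> assms(2) by auto
      ultimately have "a = u" "b = v" using assms(1,3) v(1) by (auto dest: inj_onD)
      thus False using v \<open>u \<in> R\<close> \<open>(a,b)\<in>E\<close> by auto
    qed
    thus "x \<in> srcs (map_prod p p ` E) (p ` R)" using v by (auto simp: srcs_def)
  qed
qed

lemma remaining_image:
  assumes "inj_on p {1..n}" "p ` {1..n} = {1..n}" "E \<subseteq> {1..n} \<times> {1..n}"
  shows "remaining n (map_prod p p ` E) i = p ` remaining n E i"
proof (induction i)
  case 0 then show ?case using assms by simp
next
  case (Suc i)
  have "remaining n (map_prod p p ` E) (Suc i) = p ` remaining n E i - p ` srcs E (remaining n E i)"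
    using Suc srcs_image[OF assms(1) assms(3) remaining_subset] by simp
  also have "\<dots> = p ` (remaining n E i - srcs E (remaining n E i))"
    by (rule inj_on_image_set_diff[symmetric, OF assms(1)])
       (use remaining_subset srcs_subset in blast)+
  finally show ?case by simp
qed

lemma layer_size_image:
  assumes "inj_on p {1..n}" "p ` {1..n} = {1..n}" "E \<subseteq> {1..n} \<times> {1..n}"
  shows "layer_size n (map_prod p p ` E) i = layer_size n E i"
proof -
  have "root_layer n (map_prod p p ` E) i = p ` root_layer n E i"
    unfolding root_layer_def remaining_image[OF assms]
    by (rule srcs_image[OF assms(1,3) remaining_subset])
  moreover have "inj_on p (root_layer n E i)"
    by (rule inj_on_subset[OF assms(1)]) (metis root_layer_def srcs_subset remaining_subset subset_trans)
  ultimately show ?thesis unfolding layer_size_def by (simp add: card_image)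
qed

lemma acyclic_image:
  assumes "inj_on p V" "E \<subseteq> V \<times> V" "acyclic E"
  shows "acyclic (map_prod p p ` E)"
proof -
  have E: "E\<^sup>+ \<subseteq> V \<times> V" using assms(2) by (rule trancl_subset_Sigma)
  have *: "\<exists>a b. x = p a \<and> y = p b \<and> (a,b) \<in> E\<^sup>+" if "(x,y) \<in> (map_prod p p ` E)\<^sup>+" for x y
    using that
  proof (induction rule: trancl_induct)
    case (base y) then show ?case by auto
  next
    case (step y z)
    then obtain a b where ab: "x = p a" "y = p b" "(a,b) \<in> E\<^sup>+" by blast
    from step(2) obtain c d where cd: "(c,d) \<in> E" "y = p c" "z = p d" by auto
    have "b \<in> V" "c \<in> V" using ab(3) E cd(1) assms(2) by auto
    then have "b = c" using ab(2) cd(2) assms(1) by (auto dest: inj_onD)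
    then show ?case using ab cd by (metis trancl.trancl_into_trancl)
  qed
  show ?thesis unfolding acyclic_def
  proof
    fix x show "(x,x) \<notin> (map_prod p p ` E)\<^sup>+"
    proof
      assume "(x,x) \<in> (map_prod p p ` E)\<^sup>+"
      then obtain a b where "x = p a" "x = p b" "(a,b) \<in> E\<^sup>+" using * by blast
      moreover have "a \<in> V" "b \<in> V" using E \<open>(a,b) \<in> E\<^sup>+\<close> by auto
      ultimately have "(a,a) \<in> E\<^sup>+" using assms(1) by (auto dest: inj_onD)
      thus False using assms(3) by (auto simp: acyclic_def)
    qed
  qed
qed


lemma card_map_prod_image:
  assumes "inj_on p V" "E \<subseteq> V \<times> V"
  shows "card (map_prod p p ` E) = card E"
  by (rule card_image, rule inj_on_subset[OF map_prod_inj_on[OF assms(1) assms(1)] assms(2)])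

lemma perm_exists:
  fixes n :: nat and S T :: "nat set"
  assumes "S \<subseteq> {1..n}" "T \<subseteq> {1..n}" "card S = card T"
  obtains p where "bij_betw p {1..n} {1..n}" "p ` S = T"
proof -
  have fS: "finite S" "finite T" using assms(1,2) by (auto intro: finite_subset)
  obtain f where f: "bij_betw f S T" using finite_same_card_bij[OF fS assms(3)] by blast
  have "card ({1..n} - S) = card ({1..n} - T)"
    using assms fS by (simp add: card_Diff_subset)
  then obtain g where g: "bij_betw g ({1..n} - S) ({1..n} - T)"
    using finite_same_card_bij by (metis finite_Diff finite_atLeastAtMost)
  define p where "p x = (if x \<in> S then f x else g x)" for x
  have 1: "bij_betw p S T" using f by (rule bij_betw_cong[THEN iffD1, rotated]) (simp add: p_def)
  have 2: "bij_betw p ({1..n} - S) ({1..n} - T)" using g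
    by (rule bij_betw_cong[THEN iffD1, rotated]) (simp add: p_def)
  have "bij_betw p (S \<union> ({1..n} - S)) (T \<union> ({1..n} - T))"
    by (rule bij_betw_combine[OF 1 2]) auto
  moreover have "S \<union> ({1..n} - S) = {1..n}" "T \<union> ({1..n} - T) = {1..n}" using assms by auto
  ultimately have "bij_betw p {1..n} {1..n}" by simp
  moreover have "p ` S = T" using 1 by (simp add: bij_betw_def)
  ultimately show ?thesis using that by blast
qed

lemma sum_srcs_sym:
  assumes "S \<subseteq> {1..n}" "T \<subseteq> {1..n}" "card S = card T"
  shows "(\<Sum>E\<in>{E\<in>dags n. srcs E {1..n} = S \<and> Q (layer_size n E)}. dag_weight z w n E)
       = (\<Sum>E\<in>{E\<in>dags n. srcs E {1..n} = T \<and> Q (layer_size n E)}. dag_weight z w n E)"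
proof -
  obtain p where p: "bij_betw p {1..n} {1..n}" "p ` S = T" using perm_exists[OF assms] by blast
  define q where "q = inv_into {1..n} p"
  have q: "bij_betw q {1..n} {1..n}" unfolding q_def by (rule bij_betw_inv_into[OF p(1)])
  have qp: "q (p x) = x" if "x \<in> {1..n}" for x
    using p(1) that unfolding q_def by (simp add: bij_betw_def inv_into_f_f)
  have pq: "p (q x) = x" if "x \<in> {1..n}" for x
    using p(1) that unfolding q_def by (simp add: bij_betw_def f_inv_into_f)
  have ip: "inj_on p {1..n}" "p ` {1..n} = {1..n}" using p(1) by (auto simp: bij_betw_def)
  have iq: "inj_on q {1..n}" "q ` {1..n} = {1..n}" using q by (auto simp: bij_betw_def)
  have qT: "q ` T = S"
  proof -
    have "q ` T = q ` p ` S" using p(2) by simp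
    also have "\<dots> = (\<lambda>x. x) ` S" unfolding image_image by (rule image_cong[OF refl]) (use assms(1) qp in auto)
    finally show ?thesis by simp
  qed
  show ?thesis
  proof (rule sum.reindex_bij_witness[where i = "\<lambda>E. map_prod q q ` E" and j = "\<lambda>E. map_prod p p ` E"])
    fix E assume E: "E \<in> {E\<in>dags n. srcs E {1..n} = S \<and> Q (layer_size n E)}"
    then have Es: "E \<subseteq> {1..n} \<times> {1..n}" "acyclic E" by (auto simp: dags_def)
    have pEs: "map_prod p p ` E \<subseteq> {1..n} \<times> {1..n}" using Es ip by auto
    show "map_prod q q ` map_prod p p ` E = E"
    proof -
      have "map_prod q q ` map_prod p p ` E = (\<lambda>x. x) ` E"
        unfolding image_image
        by (rule image_cong[OF refl]) (use Es qp in auto)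
      thus ?thesis by simp
    qed
    have "srcs (map_prod p p ` E) {1..n} = p ` srcs E {1..n}"
      using srcs_image[OF ip(1) Es(1), of "{1..n}"] ip(2) by simp
    show "map_prod p p ` E \<in> {E\<in>dags n. srcs E {1..n} = T \<and> Q (layer_size n E)}"
    proof -
      have "layer_size n (map_prod p p ` E) = layer_size n E"
        by (rule ext, rule layer_size_image[OF ip Es(1)])
      then show ?thesis using E pEs acyclic_image[OF ip(1) Es] p(2) \<open>srcs (map_prod p p ` E) {1..n} = p ` srcs E {1..n}\<close>
        unfolding dags_def by simp
    qed
    show "dag_weight z w n (map_prod p p ` E) = dag_weight z w n E"
      unfolding dag_weight_def card_map_prod_image[OF ip(1) Es(1)] ..
  next
    fix E assume E: "E \<in> {E\<in>dags n. srcs E {1..n} = T \<and> Q (layer_size n E)}"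
    then have Es: "E \<subseteq> {1..n} \<times> {1..n}" "acyclic E" by (auto simp: dags_def)
    have qEs: "map_prod q q ` E \<subseteq> {1..n} \<times> {1..n}" using Es iq by auto
    show "map_prod p p ` map_prod q q ` E = E"
    proof -
      have "map_prod p p ` map_prod q q ` E = (\<lambda>x. x) ` E"
        unfolding image_image
        by (rule image_cong[OF refl]) (use Es pq in auto)
      thus ?thesis by simp
    qed
    have "srcs (map_prod q q ` E) {1..n} = q ` srcs E {1..n}"
      using srcs_image[OF iq(1) Es(1), of "{1..n}"] iq(2) by simp
    show "map_prod q q ` E \<in> {E\<in>dags n. srcs E {1..n} = S \<and> Q (layer_size n E)}"
    proof -
      have "layer_size n (map_prod q q ` E) = layer_size n E"
        by (rule ext, rule layer_size_image[OF iq Es(1)])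
      then show ?thesis using E qEs acyclic_image[OF iq(1) Es] qT \<open>srcs (map_prod q q ` E) {1..n} = q ` srcs E {1..n}\<close>
        unfolding dags_def by simp
    qed
  qed
qed



lemma srcs_restrict:
  assumes "R \<subseteq> U"
  shows "srcs E R = srcs (E \<inter> (U \<times> U)) R"
  using assms by (auto simp: srcs_def)

lemma remaining_decomp:
  fixes a r :: nat
  assumes "srcs E {1..a+r} = {r<..a+r}"
  shows "remaining (a+r) E (Suc i) = remaining r (E \<inter> ({1..r}\<times>{1..r})) i"
proof (induction i)
  case 0
  have "{1..a+r} - {r<..a+r} = {1..r}" by auto
  then show ?case using assms by simp
next
  case (Suc i)
  have "remaining (a+r) E (Suc (Suc i)) = remaining (a+r) E (Suc i) - srcs E (remaining (a+r) E (Suc i))"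
    by simp
  also have "\<dots> = remaining r (E \<inter> ({1..r}\<times>{1..r})) i - srcs (E \<inter> ({1..r}\<times>{1..r})) (remaining r (E \<inter> ({1..r}\<times>{1..r})) i)"
    using Suc srcs_restrict[OF remaining_subset[of r "E \<inter> ({1..r}\<times>{1..r})" i], of E] by simp
  finally show ?case by simp
qed

lemma layer_decomp:
  fixes a r :: nat
  assumes "srcs E {1..a+r} = {r<..a+r}"
  shows "layer_size (a+r) E (Suc (Suc i)) = layer_size r (E \<inter> ({1..r}\<times>{1..r})) (Suc i)"
  unfolding layer_size_def root_layer_def
  using remaining_decomp[OF assms, of i] srcs_restrict[OF remaining_subset[of r "E \<inter> ({1..r}\<times>{1..r})" i], of E] by simp

lemma layer1_decomp:
  fixes a r :: nat
  assumes "srcs E {1..a+r} = {r<..a+r}"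
  shows "layer_size (a+r) E 1 = a"
  unfolding layer_size_def root_layer_def using assms by simp

lemma acyclic_Un_layer:
  assumes "H \<subseteq> U \<times> U" "X \<subseteq> T \<times> U" "T \<inter> U = {}" "acyclic H"
  shows "acyclic (H \<union> X)"
proof -
  have HU: "H\<^sup>+ \<subseteq> U \<times> U" using assms(1) by (rule trancl_subset_Sigma)
  have *: "x \<in> U \<Longrightarrow> (x,y) \<in> H\<^sup>+" if "(x,y) \<in> (H \<union> X)\<^sup>+" for x y
    using that
  proof (induction rule: trancl_induct)
    case (base y) then show ?case using assms(2,3) by auto
  next
    case (step y z)
    then have "(x,y) \<in> H\<^sup>+" by blast
    then have "y \<in> U" using HU by auto
    then have "(y,z) \<in> H" using step(2) assms(2,3) by auto
    then show ?case using \<open>(x,y) \<in> H\<^sup>+\<close> by (metis trancl.trancl_into_trancl)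
  qed
  have R: "(x,y) \<in> (H \<union> X)\<^sup>+ \<Longrightarrow> y \<in> U" for x y
  proof -
    assume "(x,y) \<in> (H \<union> X)\<^sup>+"
    then obtain z where "(z,y) \<in> H \<union> X" using tranclD2 by metis
    thus "y \<in> U" using assms(1,2) by auto
  qed
  show ?thesis unfolding acyclic_def
  proof (intro allI notI)
    fix x assume "(x,x) \<in> (H \<union> X)\<^sup>+"
    then have "(x,x) \<in> H\<^sup>+" using * R by blast
    thus False using assms(4) by (auto simp: acyclic_def)
  qed
qed

definition Bset :: "nat \<Rightarrow> nat \<Rightarrow> (nat \<times> nat) set \<Rightarrow> nat \<Rightarrow> nat set set" where
  "Bset a r H v = (if v \<in> srcs H {1..r} then Pow {r<..a+r} - {{}} else Pow {r<..a+r})"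

definition mkE :: "nat \<Rightarrow> (nat \<times> nat) set \<Rightarrow> (nat \<Rightarrow> nat set) \<Rightarrow> (nat \<times> nat) set" where
  "mkE r H f = H \<union> {(t,v). v \<in> {1..r} \<and> t \<in> f v}"

lemma card_mkE:
  fixes r :: nat
  assumes "H \<subseteq> {1..r} \<times> {1..r}" "\<forall>v\<in>{1..r}. f v \<subseteq> T" "T \<inter> {1..r} = {}" "finite T"
  shows "card (mkE r H f) = card H + (\<Sum>v\<in>{1..r}. card (f v))"
proof -
  define X where "X = {(t,v). v \<in> {1..r} \<and> t \<in> f v}"
  have X: "X = (\<lambda>(v,t). (t,v)) ` Sigma {1..r} f" unfolding X_def by auto
  have fin: "\<forall>v\<in>{1..r}. finite (f v)" using assms(2,4) finite_subset by blast
  have "card X = card (Sigma {1..r} f)" unfolding X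
    by (rule card_image) (auto simp: inj_on_def)
  also have "\<dots> = (\<Sum>v\<in>{1..r}. card (f v))" using fin by simp
  finally have cX: "card X = (\<Sum>v\<in>{1..r}. card (f v))" .
  have "H \<inter> X = {}" using assms(1,2,3) unfolding X_def by auto
  moreover have "finite H" using assms(1) finite_subset by blast
  moreover have "finite X" unfolding X using fin by auto
  ultimately show ?thesis unfolding mkE_def X_def[symmetric] using cX by (simp add: card_Un_disjoint)
qed


lemma decomp_sum:
  fixes a r :: nat and g :: "nat \<Rightarrow> 'b::comm_monoid_add"
  shows "(\<Sum>E\<in>{E\<in>dags (a+r). srcs E {1..a+r} = {r<..a+r} \<and> P (\<lambda>i. layer_size (a+r) E (Suc (Suc i)))}. g (card E))
   = (\<Sum>Hf\<in>Sigma {H\<in>dags r. P (\<lambda>i. layer_size r H (Suc i))} (\<lambda>H. PiE {1..r} (Bset a r H)).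
        g (card (fst Hf) + (\<Sum>v\<in>{1..r}. card (snd Hf v))))"
proof (rule sum.reindex_bij_witness[where i = "\<lambda>Hf. mkE r (fst Hf) (snd Hf)"
      and j = "\<lambda>E. (E \<inter> ({1..r}\<times>{1..r}), restrict (\<lambda>v. {t\<in>{r<..a+r}. (t,v)\<in>E}) {1..r})"])
  let ?U = "{1..r}" and ?T = "{r<..a+r}"
  have TU: "?T \<inter> ?U = {}" by auto
  {
    fix E assume E: "E \<in> {E\<in>dags (a+r). srcs E {1..a+r} = {r<..a+r} \<and> P (\<lambda>i. layer_size (a+r) E (Suc (Suc i)))}"
    then have Es: "E \<subseteq> {1..a+r} \<times> {1..a+r}" "acyclic E" "srcs E {1..a+r} = ?T"
      "P (\<lambda>i. layer_size (a+r) E (Suc (Suc i)))" by (auto simp: dags_def)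
    define H where "H = E \<inter> (?U \<times> ?U)"
    define f where "f = restrict (\<lambda>v. {t\<in>?T. (t,v)\<in>E}) ?U"
    have noT: "v \<notin> ?T" if "(u,v) \<in> E" for u v
    proof
      assume "v \<in> ?T"
      then have "v \<in> srcs E {1..a+r}" using Es(3) by simp
      moreover have "u \<in> {1..a+r}" using that Es(1) by auto
      ultimately show False using that by (auto simp: srcs_def)
    qed
    have Eform: "(u,v) \<in> E \<Longrightarrow> v \<in> ?U \<and> (u \<in> ?U \<or> u \<in> ?T)" for u v
      using noT[of u v] Es(1) by auto
    show "mkE r (fst (H, f)) (snd (H, f)) = E"
      unfolding mkE_def H_def f_def by (auto dest: Eform)
    have lay: "(\<lambda>i. layer_size r H (Suc i)) = (\<lambda>i. layer_size (a+r) E (Suc (Suc i)))"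
      unfolding H_def using layer_decomp[OF Es(3)] by simp
    have Hd: "H \<in> dags r" unfolding H_def dags_def using Es(2)
      by (auto intro: acyclic_subset)
    have fB: "f \<in> PiE ?U (Bset a r H)"
    proof -
      have "f v \<in> Bset a r H v" if v: "v \<in> ?U" for v
      proof (cases "v \<in> srcs H ?U")
        case True
        have "v \<notin> srcs E {1..a+r}" using v Es(3) by auto
        then obtain u where "u \<in> {1..a+r}" "(u,v) \<in> E" using v by (auto simp: srcs_def)
        moreover have "u \<notin> ?U" using True \<open>(u,v)\<in>E\<close> v unfolding H_def srcs_def by auto
        ultimately have "u \<in> f v" using v unfolding f_def by auto
        then show ?thesis using True v unfolding Bset_def f_def by auto
      next
        case False
        then show ?thesis using v unfolding Bset_def f_def by auto
      qed
      moreover have "f \<in> extensional ?U" unfolding f_def by simp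
      ultimately show ?thesis by (auto simp: PiE_iff)
    qed
    show "(H, f) \<in> Sigma {H\<in>dags r. P (\<lambda>i. layer_size r H (Suc i))} (\<lambda>H. PiE ?U (Bset a r H))"
      using Hd fB lay Es(4) by simp
    have fT: "\<forall>v\<in>?U. f v \<subseteq> ?T" unfolding f_def by auto
    have "card (mkE r H f) = card H + (\<Sum>v\<in>?U. card (f v))"
      by (rule card_mkE[OF _ fT TU]) (auto simp: H_def)
    then show "g (card (fst (H,f)) + (\<Sum>v\<in>?U. card (snd (H,f) v))) = g (card E)"
      using \<open>mkE r (fst (H, f)) (snd (H, f)) = E\<close> by simp
  }
  {
    fix Hf assume Hf: "Hf \<in> Sigma {H\<in>dags r. P (\<lambda>i. layer_size r H (Suc i))} (\<lambda>H. PiE ?U (Bset a r H))"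
    obtain H f where Hf_eq: "Hf = (H,f)" by fastforce
    have H: "H \<subseteq> ?U \<times> ?U" "acyclic H" "P (\<lambda>i. layer_size r H (Suc i))"
      using Hf Hf_eq by (auto simp: dags_def)
    have f: "f \<in> PiE ?U (Bset a r H)" using Hf Hf_eq by auto
    have fT: "\<forall>v\<in>?U. f v \<subseteq> ?T" using f by (auto simp: PiE_iff Bset_def split: if_splits)
    have fne: "\<forall>v\<in>srcs H ?U. f v \<noteq> {}"
    proof
      fix v assume v: "v \<in> srcs H ?U"
      then have "v \<in> ?U" using srcs_subset by blast
      then have "f v \<in> Bset a r H v" using f by (auto simp: PiE_iff)
      thus "f v \<noteq> {}" using v by (simp add: Bset_def)
    qed
    define X where "X = {(t,v). v \<in> ?U \<and> t \<in> f v}"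
    have E: "mkE r H f = H \<union> X" unfolding mkE_def X_def ..
    have X: "X \<subseteq> ?T \<times> ?U" using fT unfolding X_def by auto
    have Es: "H \<union> X \<subseteq> {1..a+r} \<times> {1..a+r}" using H(1) X by fastforce
    have acy: "acyclic (H \<union> X)" by (rule acyclic_Un_layer[OF H(1) X TU H(2)])
    have srcsE: "srcs (H \<union> X) {1..a+r} = ?T"
    proof (rule set_eqI)
      fix v show "v \<in> srcs (H \<union> X) {1..a+r} \<longleftrightarrow> v \<in> ?T"
      proof (cases "v \<in> ?U")
        case True
        have "\<exists>u\<in>{1..a+r}. (u,v) \<in> H \<union> X"
        proof (cases "v \<in> srcs H ?U")
          case True
          then obtain t where "t \<in> f v" using fne by blast
          then show ?thesis using \<open>v \<in> ?U\<close> fT unfolding X_def by force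
        next
          case False
          then obtain u where "u \<in> ?U" "(u,v) \<in> H" using \<open>v \<in> ?U\<close> by (auto simp: srcs_def)
          then show ?thesis by force
        qed
        then show ?thesis using True by (auto simp: srcs_def)
      next
        case False
        then show ?thesis using H(1) X by (auto simp: srcs_def)
      qed
    qed
    have restr: "(H \<union> X) \<inter> (?U \<times> ?U) = H" using H(1) X by auto
    have lay: "(\<lambda>i. layer_size (a+r) (H \<union> X) (Suc (Suc i))) = (\<lambda>i. layer_size r H (Suc i))"
      using layer_decomp[OF srcsE] restr by simp
    show "mkE r (fst Hf) (snd Hf) \<in> {E\<in>dags (a+r). srcs E {1..a+r} = ?T \<and> P (\<lambda>i. layer_size (a+r) E (Suc (Suc i)))}"
      unfolding Hf_eq using Es acy srcsE lay H(3) by (simp add: dags_def E)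
    have ff: "restrict (\<lambda>v. {t\<in>?T. (t,v)\<in>H \<union> X}) ?U = f"
    proof (rule ext)
      fix v show "restrict (\<lambda>v. {t\<in>?T. (t,v)\<in>H \<union> X}) ?U v = f v"
      proof (cases "v \<in> ?U")
        case True
        then have "f v \<subseteq> ?T" using fT by blast
        then show ?thesis using True H(1) unfolding X_def by auto
      next
        case False
        then show ?thesis using f by (auto simp: PiE_iff extensional_def)
      qed
    qed
    show "(mkE r (fst Hf) (snd Hf) \<inter> (?U \<times> ?U), restrict (\<lambda>v. {t\<in>?T. (t,v)\<in>mkE r (fst Hf) (snd Hf)}) ?U) = Hf"
      unfolding Hf_eq using restr ff by (simp add: E)
  }
qed



lemma sum_pow_card:
  fixes w :: real
  assumes "finite T"
  shows "(\<Sum>Y\<in>Pow T. w ^ card Y) = (1 + w) ^ card T"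
  using assms
proof (induction T rule: finite_induct)
  case empty then show ?case by simp
next
  case (insert x F)
  have "Pow (insert x F) = Pow F \<union> insert x ` Pow F" by (rule Pow_insert)
  moreover have "Pow F \<inter> insert x ` Pow F = {}" using insert(2) by auto
  moreover have "inj_on (insert x) (Pow F)" using insert(2) by (auto simp: inj_on_def)
  ultimately have "(\<Sum>Y\<in>Pow (insert x F). w ^ card Y) = (\<Sum>Y\<in>Pow F. w ^ card Y) + (\<Sum>Y\<in>Pow F. w ^ card (insert x Y))"
    using insert(1) by (simp add: sum.union_disjoint sum.reindex)
  also have "(\<Sum>Y\<in>Pow F. w ^ card (insert x Y)) = (\<Sum>Y\<in>Pow F. w * w ^ card Y)"
  proof (rule sum.cong[OF refl])
    fix Y assume "Y \<in> Pow F"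
    then have "finite Y" "x \<notin> Y" using insert(1,2) finite_subset by auto
    then show "w ^ card (insert x Y) = w * w ^ card Y" by simp
  qed
  also have "\<dots> = w * (\<Sum>Y\<in>Pow F. w ^ card Y)" by (rule sum_distrib_left[symmetric])
  also have "\<dots> = w * (1 + w) ^ card F" using insert(3) by simp
  finally show ?case using insert by (simp add: algebra_simps)
qed

lemma sum_pow_card_ne:
  fixes w :: real
  assumes "finite T"
  shows "(\<Sum>Y\<in>Pow T - {{}}. w ^ card Y) = (1 + w) ^ card T - 1"
  using sum_pow_card[OF assms, of w] assms by (simp add: sum_diff1)

lemma sum_PiE_Bset:
  fixes w :: real
  shows "(\<Sum>f\<in>PiE {1..r} (Bset a r H). \<Prod>v\<in>{1..r}. w ^ card (f v))
       = ((1 + w) ^ a - 1) ^ card (srcs H {1..r}) * ((1 + w) ^ a) ^ (r - card (srcs H {1..r}))"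
proof -
  have "(\<Sum>f\<in>PiE {1..r} (Bset a r H). \<Prod>v\<in>{1..r}. w ^ card (f v))
      = (\<Prod>v\<in>{1..r}. \<Sum>Y\<in>Bset a r H v. w ^ card Y)"
    by (rule prod_sum_PiE[symmetric]) (auto simp: Bset_def)
  also have "\<dots> = (\<Prod>v\<in>{1..r}. if v \<in> srcs H {1..r} then (1 + w) ^ a - 1 else (1 + w) ^ a)"
    by (rule prod.cong[OF refl]) (simp add: Bset_def sum_pow_card_ne sum_pow_card)
  also have "\<dots> = ((1 + w) ^ a - 1) ^ card ({1..r} \<inter> srcs H {1..r}) * ((1 + w) ^ a) ^ card ({1..r} - srcs H {1..r})"
    by (simp add: prod.If_cases Diff_eq)
  also have "{1..r} \<inter> srcs H {1..r} = srcs H {1..r}" using srcs_subset by blast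
  also have "card ({1..r} - srcs H {1..r}) = r - card (srcs H {1..r})"
    by (simp add: card_Diff_subset srcs_subset finite_subset[OF srcs_subset])
  finally show ?thesis .
qed

lemma choose2_add: "(a + r) choose 2 = (a choose 2) + (r choose 2) + a * r"
proof (induction r)
  case 0 then show ?case by simp
next
  case (Suc r)
  have "(a + Suc r) choose 2 = (a + r) + ((a + r) choose 2)"
    using binomial_Suc_Suc[of "a+r" 1] by (simp add: numeral_2_eq_2)
  moreover have "Suc r choose 2 = r + (r choose 2)"
    using binomial_Suc_Suc[of r 1] by (simp add: numeral_2_eq_2)
  ultimately show ?case using Suc by simp
qed

lemma weight_arith:
  fixes z w :: real
  assumes "w > 0" "s \<le> r"
  shows "real ((a+r) choose a) * (z^(a+r) * w^c / ((1+w)^((a+r) choose 2) * fact (a+r)))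
           * (((1+w)^a - 1)^s * ((1+w)^a)^(r-s))
       = z^a / (fact a * (1+w)^(a choose 2)) * (((1+w)^a - 1) / (1+w)^a)^s
           * (z^r * w^c / ((1+w)^(r choose 2) * fact r))"
proof -
  have b: "real ((a+r) choose a) = fact (a+r) / (fact a * fact r)"
    by (subst binomial_fact) auto
  have p: "((1+w)^a)^(r-s) = ((1+w)^a)^r / ((1+w)^a)^s"
    using assms by (simp add: power_diff)
  have q: "(1+w)^((a+r) choose 2) = (1+w)^(a choose 2) * (1+w)^(r choose 2) * ((1+w)^a)^r"
    by (simp add: choose2_add power_add power_mult)
  have nz: "(1+w) \<noteq> 0" using assms by simp
  show ?thesis unfolding b p q using nz
    by (simp add: field_simps power_divide power_add)
qed



definition K0 :: "real \<Rightarrow> real \<Rightarrow> nat \<Rightarrow> real" where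
  "K0 z w a = z^a / (fact a * (1+w)^(a choose 2))"

definition qq :: "real \<Rightarrow> nat \<Rightarrow> real" where
  "qq w a = ((1+w)^a - 1) / (1+w)^a"

lemma layer1_card: "layer_size n E 1 = card (srcs E {1..n})"
  by (simp add: layer_size_def root_layer_def)

lemma layer1_card': "layer_size n E (Suc 0) = card (srcs E {1..n})"
  by (simp add: layer_size_def root_layer_def)

lemma srcs_mem: "x \<in> srcs E R \<Longrightarrow> x \<in> R"
  by (simp add: srcs_def)

lemma peel_top:
  fixes z w :: real and a r :: nat
  assumes "w > 0"
  shows "real ((a+r) choose a) * (\<Sum>E\<in>{E\<in>dags (a+r). srcs E {1..a+r} = {r<..a+r} \<and> P (\<lambda>i. layer_size (a+r) E (Suc (Suc i)))}. dag_weight z w (a+r) E)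
    = K0 z w a * (\<Sum>H\<in>{H\<in>dags r. P (\<lambda>i. layer_size r H (Suc i))}. qq w a ^ layer_size r H 1 * dag_weight z w r H)"
proof -
  let ?S = "{H\<in>dags r. P (\<lambda>i. layer_size r H (Suc i))}"
  let ?D = "(1+w)^((a+r) choose 2) * fact (a+r) :: real"
  have finS: "finite ?S" using finite_dags by auto
  have "(\<Sum>E\<in>{E\<in>dags (a+r). srcs E {1..a+r} = {r<..a+r} \<and> P (\<lambda>i. layer_size (a+r) E (Suc (Suc i)))}. dag_weight z w (a+r) E)
      = (\<Sum>Hf\<in>Sigma ?S (\<lambda>H. PiE {1..r} (Bset a r H)).
        (\<lambda>c. z^(a+r) * w^c / ?D) (card (fst Hf) + (\<Sum>v\<in>{1..r}. card (snd Hf v))))"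
    unfolding dag_weight_def by (rule decomp_sum)
  also have "\<dots> = (\<Sum>H\<in>?S. \<Sum>f\<in>PiE {1..r} (Bset a r H). z^(a+r) * w^(card H) / ?D * (\<Prod>v\<in>{1..r}. w ^ card (f v)))"
  proof -
    have fin2: "\<forall>H\<in>?S. finite (PiE {1..r} (Bset a r H))" by (auto simp: finite_PiE Bset_def)
    show ?thesis
      unfolding sum.Sigma[OF finS fin2]
      by (rule sum.cong[OF refl]) (auto simp: power_add power_sum)
  qed
  also have "\<dots> = (\<Sum>H\<in>?S. z^(a+r) * w^(card H) / ?D * (((1 + w) ^ a - 1) ^ card (srcs H {1..r}) * ((1 + w) ^ a) ^ (r - card (srcs H {1..r}))))"
    by (rule sum.cong[OF refl], subst sum_distrib_left[symmetric], subst sum_PiE_Bset, rule refl)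
  finally have eq: "(\<Sum>E\<in>{E\<in>dags (a+r). srcs E {1..a+r} = {r<..a+r} \<and> P (\<lambda>i. layer_size (a+r) E (Suc (Suc i)))}. dag_weight z w (a+r) E) = \<dots>" .
  show ?thesis unfolding eq sum_distrib_left
  proof (rule sum.cong[OF refl])
    fix H assume "H \<in> ?S"
    have "card (srcs H {1..r}) \<le> r"
      using card_mono[OF _ srcs_subset, of "{1..r}" H] by simp
    then show "real ((a+r) choose a) * (z^(a+r) * w^(card H) / ?D * (((1 + w) ^ a - 1) ^ card (srcs H {1..r}) * ((1 + w) ^ a) ^ (r - card (srcs H {1..r}))))
      = K0 z w a * (qq w a ^ layer_size r H 1 * dag_weight z w r H)"
      using weight_arith[OF assms, of "card (srcs H {1..r})" r a z "card H"]
      unfolding K0_def qq_def dag_weight_def layer1_card by (simp add: mult.assoc)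
  qed
qed


lemma peel:
  fixes z w :: real and a n :: nat
  assumes "w > 0"
  shows "(\<Sum>E\<in>{E\<in>dags n. layer_size n E 1 = a \<and> P (\<lambda>i. layer_size n E (Suc (Suc i)))}. dag_weight z w n E)
    = (if a \<le> n then K0 z w a * (\<Sum>H\<in>{H\<in>dags (n-a). P (\<lambda>i. layer_size (n-a) H (Suc i))}. qq w a ^ layer_size (n-a) H 1 * dag_weight z w (n-a) H) else 0)"
proof (cases "a \<le> n")
  case False
  have e: "{E\<in>dags n. layer_size n E 1 = a \<and> P (\<lambda>i. layer_size n E (Suc (Suc i)))} = {}"
  proof -
    have "layer_size n E 1 \<le> n" for E
      unfolding layer1_card using card_mono[OF _ srcs_subset, of "{1..n}" E] by simp
    then show ?thesis using False by force
  qed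
  show ?thesis unfolding e using False by simp
next
  case True
  then obtain r where n: "n = a + r" using le_Suc_ex by blast
  let ?A = "{E\<in>dags n. layer_size n E 1 = a \<and> P (\<lambda>i. layer_size n E (Suc (Suc i)))}"
  let ?T = "{S. S \<subseteq> {1..n} \<and> card S = a}"
  let ?inner = "\<lambda>S. (\<Sum>E\<in>{E\<in>dags n. srcs E {1..n} = S \<and> (\<lambda>g. P (\<lambda>i. g (Suc (Suc i)))) (layer_size n E)}. dag_weight z w n E)"
  have finA: "finite ?A" using finite_dags by auto
  have finT: "finite ?T" by (rule finite_subset[of _ "Pow {1..n}"]) auto
  have "(\<Sum>E\<in>?A. dag_weight z w n E) = (\<Sum>S\<in>?T. \<Sum>E\<in>{E. E \<in> ?A \<and> srcs E {1..n} = S}. dag_weight z w n E)"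
    by (rule sum.group[symmetric, OF finA finT]) (auto simp: layer1_card layer1_card' dest: srcs_mem)
  also have "\<dots> = (\<Sum>S\<in>?T. ?inner S)"
  proof (rule sum.cong[OF refl])
    fix S assume "S \<in> ?T"
    then have "{E. E \<in> ?A \<and> srcs E {1..n} = S} = {E\<in>dags n. srcs E {1..n} = S \<and> (\<lambda>g. P (\<lambda>i. g (Suc (Suc i)))) (layer_size n E)}"
      by (auto simp: layer1_card layer1_card')
    then show "(\<Sum>E\<in>{E. E \<in> ?A \<and> srcs E {1..n} = S}. dag_weight z w n E) = ?inner S" by simp
  qed
  also have "\<dots> = (\<Sum>S\<in>?T. ?inner {r<..a+r})"
  proof (rule sum.cong[OF refl])
    fix S assume "S \<in> ?T"
    then show "?inner S = ?inner {r<..a+r}"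
      by (intro sum_srcs_sym) (auto simp: n)
  qed
  also have "\<dots> = real (n choose a) * ?inner {r<..a+r}"
    using n_subsets[of "{1..n}" a] by simp
  also have "\<dots> = K0 z w a * (\<Sum>H\<in>{H\<in>dags r. P (\<lambda>i. layer_size r H (Suc i))}. qq w a ^ layer_size r H 1 * dag_weight z w r H)"
    unfolding n using peel_top[OF assms, where P=P and a=a and r=r and z=z] by simp
  finally show ?thesis using True n by simp
qed


fun sh :: "nat \<Rightarrow> (nat \<Rightarrow> nat) \<Rightarrow> nat" where
  "sh 0 ns = 0"
| "sh (Suc j) ns = ns 1 + sh j (\<lambda>i. ns (Suc i))"

fun Cst :: "real \<Rightarrow> real \<Rightarrow> nat \<Rightarrow> (nat \<Rightarrow> nat) \<Rightarrow> real" where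
  "Cst z w 0 ns = 1"
| "Cst z w (Suc j) ns = K0 z w (ns 1) * qq w (ns 1) ^ ns 2 * Cst z w j (\<lambda>i. ns (Suc i))"

lemma all_split2:
  "(\<forall>i\<in>{1..Suc (Suc j)}. f i = (ns i :: nat)) \<longleftrightarrow>
     f 1 = ns 1 \<and> f (Suc (Suc 0)) = ns (Suc (Suc 0)) \<and> (\<forall>i\<in>{1..j}. f (Suc (Suc i)) = ns (Suc (Suc i)))"
proof
  assume "\<forall>i\<in>{1..Suc (Suc j)}. f i = ns i"
  then show "f 1 = ns 1 \<and> f (Suc (Suc 0)) = ns (Suc (Suc 0)) \<and> (\<forall>i\<in>{1..j}. f (Suc (Suc i)) = ns (Suc (Suc i)))" by auto
next
  assume A: "f 1 = ns 1 \<and> f (Suc (Suc 0)) = ns (Suc (Suc 0)) \<and> (\<forall>i\<in>{1..j}. f (Suc (Suc i)) = ns (Suc (Suc i)))"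
  show "\<forall>i\<in>{1..Suc (Suc j)}. f i = ns i"
  proof
    fix i assume i: "i \<in> {1..Suc (Suc j)}"
    show "f i = ns i"
    proof (cases "i \<le> 2")
      case True
      then have "i = 1 \<or> i = Suc (Suc 0)" using i by auto
      then show ?thesis using A by auto
    next
      case False
      then have "i - 2 \<in> {1..j}" "i = Suc (Suc (i - 2))" using i by auto
      then show ?thesis using A by metis
    qed
  qed
qed

lemma all_split1:
  "(\<forall>i\<in>{1..Suc j}. f i = (ns (Suc i) :: nat)) \<longleftrightarrow>
     f 1 = ns (Suc (Suc 0)) \<and> (\<forall>i\<in>{1..j}. f (Suc i) = ns (Suc (Suc i)))"
proof
  assume "\<forall>i\<in>{1..Suc j}. f i = ns (Suc i)"
  then show "f 1 = ns (Suc (Suc 0)) \<and> (\<forall>i\<in>{1..j}. f (Suc i) = ns (Suc (Suc i)))" by auto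
next
  assume A: "f 1 = ns (Suc (Suc 0)) \<and> (\<forall>i\<in>{1..j}. f (Suc i) = ns (Suc (Suc i)))"
  show "\<forall>i\<in>{1..Suc j}. f i = ns (Suc i)"
  proof
    fix i assume i: "i \<in> {1..Suc j}"
    show "f i = ns (Suc i)"
    proof (cases "i = 1")
      case True
      then show ?thesis using A by simp
    next
      case False
      then have "i - 1 \<in> {1..j}" "i = Suc (i - 1)" using i by auto
      then show ?thesis using A by metis
    qed
  qed
qed

lemma iter:
  fixes z w :: real
  assumes "w > 0"
  shows "(\<Sum>E\<in>{E\<in>dags n. (\<forall>i\<in>{1..Suc j}. layer_size n E i = ns i) \<and> R (\<lambda>i. layer_size n E (i + Suc j))}. dag_weight z w n E)
    = (if sh j ns \<le> n then Cst z w j ns * (\<Sum>H\<in>{H\<in>dags (n - sh j ns). layer_size (n - sh j ns) H 1 = ns (Suc j) \<and> R (\<lambda>i. layer_size (n - sh j ns) H (Suc i))}. dag_weight z w (n - sh j ns) H) else 0)"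
proof (induction j arbitrary: ns n)
  case 0
  have "{E\<in>dags n. (\<forall>i\<in>{1..Suc 0}. layer_size n E i = ns i) \<and> R (\<lambda>i. layer_size n E (i + Suc 0))}
      = {H\<in>dags n. layer_size n H 1 = ns (Suc 0) \<and> R (\<lambda>i. layer_size n H (Suc i))}" by auto
  then show ?case by simp
next
  case (Suc j)
  let ?ns = "\<lambda>i. ns (Suc i)"
  define P where "P = (\<lambda>g. g 0 = ns (Suc (Suc 0)) \<and> (\<forall>i\<in>{1..j}. g i = ns (Suc (Suc i))) \<and> R (\<lambda>i. g (i + j)))"
  have set1: "{E\<in>dags n. (\<forall>i\<in>{1..Suc (Suc j)}. layer_size n E i = ns i) \<and> R (\<lambda>i. layer_size n E (i + Suc (Suc j)))}
     = {E\<in>dags n. layer_size n E 1 = ns 1 \<and> P (\<lambda>i. layer_size n E (Suc (Suc i)))}"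
    unfolding all_split2 P_def by (rule Collect_cong) (simp add: One_nat_def)
  have set2: "{H\<in>dags m. P (\<lambda>i. layer_size m H (Suc i))}
     = {H\<in>dags m. (\<forall>i\<in>{1..Suc j}. layer_size m H i = ?ns i) \<and> R (\<lambda>i. layer_size m H (i + Suc j))}" for m
    unfolding all_split1 P_def by (rule Collect_cong) (simp add: One_nat_def)
  let ?m = "n - ns 1"
  have "(\<Sum>E\<in>{E\<in>dags n. (\<forall>i\<in>{1..Suc (Suc j)}. layer_size n E i = ns i) \<and> R (\<lambda>i. layer_size n E (i + Suc (Suc j)))}. dag_weight z w n E)
     = (if ns 1 \<le> n then K0 z w (ns 1) * (\<Sum>H\<in>{H\<in>dags ?m. P (\<lambda>i. layer_size ?m H (Suc i))}. qq w (ns 1) ^ layer_size ?m H 1 * dag_weight z w ?m H) else 0)"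
    unfolding set1 by (rule peel[OF assms])
  also have "(\<Sum>H\<in>{H\<in>dags ?m. P (\<lambda>i. layer_size ?m H (Suc i))}. qq w (ns 1) ^ layer_size ?m H 1 * dag_weight z w ?m H)
      = qq w (ns 1) ^ ns 2 * (\<Sum>H\<in>{H\<in>dags ?m. (\<forall>i\<in>{1..Suc j}. layer_size ?m H i = ?ns i) \<and> R (\<lambda>i. layer_size ?m H (i + Suc j))}. dag_weight z w ?m H)"
    unfolding set2 sum_distrib_left by (rule sum.cong[OF refl]) (auto simp: numeral_2_eq_2)
  also note Suc.IH[where ns="?ns" and n="?m"]
  finally show ?case by (auto simp: algebra_simps)
qed



lemma dag_weight_nonneg: "z > 0 \<Longrightarrow> w > 0 \<Longrightarrow> dag_weight z w n E \<ge> 0"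
  unfolding dag_weight_def by simp

lemma summable_sub:
  assumes "z > 0" "w > 0" "DAG_finite z w"
  shows "summable (\<lambda>r. \<Sum>H\<in>{H\<in>dags r. Q r H}. dag_weight z w r H)"
proof (rule summable_comparison_test)
  show "summable (\<lambda>n. \<Sum>E\<in>dags n. dag_weight z w n E)" using assms(3) by (simp add: DAG_finite_def)
  show "\<exists>N. \<forall>n\<ge>N. norm (\<Sum>H\<in>{H\<in>dags n. Q n H}. dag_weight z w n H) \<le> (\<Sum>E\<in>dags n. dag_weight z w n E)"
  proof (intro exI allI impI)
    fix n :: nat
    have "0 \<le> (\<Sum>H\<in>{H\<in>dags n. Q n H}. dag_weight z w n H)"
      by (rule sum_nonneg) (simp add: dag_weight_nonneg assms)
    moreover have "(\<Sum>H\<in>{H\<in>dags n. Q n H}. dag_weight z w n H) \<le> (\<Sum>E\<in>dags n. dag_weight z w n E)"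
      by (rule sum_mono2) (auto simp: finite_dags dag_weight_nonneg assms)
    ultimately show "norm (\<Sum>H\<in>{H\<in>dags n. Q n H}. dag_weight z w n H) \<le> (\<Sum>E\<in>dags n. dag_weight z w n E)"
      by simp
  qed
qed

lemma suminf_shift:
  fixes f g :: "nat \<Rightarrow> real"
  assumes "summable f" "\<And>n. g n = (if s \<le> n then c * f (n - s) else 0)"
  shows "suminf g = c * suminf f"
proof -
  have "(\<lambda>i. g (i + s)) = (\<lambda>i. c * f i)" using assms(2) by simp
  moreover have "(\<lambda>i. c * f i) sums (c * suminf f)"
    using assms(1) by (intro sums_mult) (simp add: summable_sums)
  ultimately have "(\<lambda>i. g (i + s)) sums (c * suminf f)" by simp
  then have "g sums (c * suminf f + (\<Sum>i<s. g i))" by (simp add: sums_iff_shift)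
  moreover have "(\<Sum>i<s. g i) = 0" using assms(2) by simp
  ultimately show ?thesis by (simp add: sums_iff)
qed

theorem lemma1:
  fixes z w :: real and k :: nat and ns :: "nat \<Rightarrow> nat" and m :: nat
  assumes "z > 0" and "w > 0" and "DAG_finite z w" and "k \<ge> 1"
    and "\<forall>i\<in>{1..k}. ns i > 0"
    and "dag_prob z w (\<lambda>n E. \<forall>i\<in>{1..k}. layer_size n E i = ns i) > 0"
  shows "dag_cond_prob z w (\<lambda>n E. layer_size n E (k + 1) = m)
                           (\<lambda>n E. \<forall>i\<in>{1..k}. layer_size n E i = ns i)
       = dag_cond_prob z w (\<lambda>n E. layer_size n E 2 = m)
                           (\<lambda>n E. layer_size n E 1 = ns k)"
proof -
  obtain j where k: "k = Suc j" using assms(4) by (cases k) auto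
  define s where "s = sh j ns"
  define C where "C = Cst z w j ns"
  define F where "F = (\<lambda>r. \<Sum>H\<in>{H\<in>dags r. layer_size r H 1 = ns k \<and> layer_size r H 2 = m}. dag_weight z w r H)"
  define G where "G = (\<lambda>r. \<Sum>H\<in>{H\<in>dags r. layer_size r H 1 = ns k}. dag_weight z w r H)"
  define D where "D = DAG_gf z w"
  have sF: "summable F" unfolding F_def by (rule summable_sub[OF assms(1-3)])
  have sG: "summable G" unfolding G_def by (rule summable_sub[OF assms(1-3)])
  have num: "event_mass z w (\<lambda>n E. layer_size n E (k + 1) = m \<and> (\<forall>i\<in>{1..k}. layer_size n E i = ns i)) = C * suminf F"
    unfolding event_mass_def
  proof (rule suminf_shift[OF sF])
    fix n
    have "{E \<in> dags n. layer_size n E (k + 1) = m \<and> (\<forall>i\<in>{1..k}. layer_size n E i = ns i)}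
       = {E\<in>dags n. (\<forall>i\<in>{1..Suc j}. layer_size n E i = ns i) \<and> (\<lambda>g. g 1 = m) (\<lambda>i. layer_size n E (i + Suc j))}"
      unfolding k by auto
    moreover have "{H\<in>dags (n - s). layer_size (n - s) H 1 = ns (Suc j) \<and> (\<lambda>g. g 1 = m) (\<lambda>i. layer_size (n - s) H (Suc i))}
       = {H\<in>dags (n - s). layer_size (n - s) H 1 = ns k \<and> layer_size (n - s) H 2 = m}"
      unfolding k by (auto simp: numeral_2_eq_2)
    ultimately show "(\<Sum>E\<in>{E \<in> dags n. layer_size n E (k + 1) = m \<and> (\<forall>i\<in>{1..k}. layer_size n E i = ns i)}. dag_weight z w n E)
       = (if s \<le> n then C * F (n - s) else 0)"
      unfolding F_def C_def s_def using iter[OF assms(2), where n=n and j=j and ns=ns and R="\<lambda>g. g 1 = m" and z=z] by simp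
  qed
  have den: "event_mass z w (\<lambda>n E. \<forall>i\<in>{1..k}. layer_size n E i = ns i) = C * suminf G"
    unfolding event_mass_def
  proof (rule suminf_shift[OF sG])
    fix n
    have "{E \<in> dags n. \<forall>i\<in>{1..k}. layer_size n E i = ns i}
       = {E\<in>dags n. (\<forall>i\<in>{1..Suc j}. layer_size n E i = ns i) \<and> (\<lambda>g. True) (\<lambda>i. layer_size n E (i + Suc j))}"
      unfolding k by auto
    moreover have "{H\<in>dags (n - s). layer_size (n - s) H 1 = ns (Suc j) \<and> (\<lambda>g. True) (\<lambda>i. layer_size (n - s) H (Suc i))}
       = {H\<in>dags (n - s). layer_size (n - s) H 1 = ns k}"
      unfolding k by auto
    ultimately show "(\<Sum>E\<in>{E \<in> dags n. \<forall>i\<in>{1..k}. layer_size n E i = ns i}. dag_weight z w n E)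
       = (if s \<le> n then C * G (n - s) else 0)"
      unfolding G_def C_def s_def using iter[OF assms(2), where n=n and j=j and ns=ns and R="\<lambda>g. True" and z=z] by simp
  qed
  have num2: "event_mass z w (\<lambda>n E. layer_size n E 2 = m \<and> layer_size n E 1 = ns k) = suminf F"
    unfolding event_mass_def F_def by (simp add: conj_commute)
  have den2: "event_mass z w (\<lambda>n E. layer_size n E 1 = ns k) = suminf G"
    unfolding event_mass_def G_def by simp
  have pos: "C * suminf G / D > 0" using assms(6) unfolding dag_prob_def den D_def .
  then have nz: "C \<noteq> 0" "suminf G \<noteq> 0" "D \<noteq> 0" by auto
  show ?thesis
    unfolding dag_cond_prob_def dag_prob_def num den num2 den2 D_def[symmetric]
    using nz by (simp add: field_simps)
qed

end
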